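(* Let $p$ be a prime and $n\ge1$. The map $\pi_2:{\rm Sub}(\mathcal{L}_{n,p})\to{\rm Sub}(\mathcal{A}_{n,p})$, $\pi_2(V)=V\cap\mathcal{A}_{n,p}$, induces by push-forward an affine map $(\pi_2)_*:{\rm IRS}(\mathcal{L}_{n,p})\to{\rm IRS}_\tau(\mathcal{A}_{n,p})$, and the restriction of $(\pi_2)_*$ to ${\rm IRS}_0(\mathcal{L}_{n,p})$ is an isomorphism onto ${\rm IRS}_\tau(\mathcal{A}_{n,p})$.
   Context: $\mathcal{A}_{n,p}=\bigoplus_{\mathbb{Z}}(\mathbb{Z}/p\mathbb{Z})^n$, $\mathcal{L}_{n,p}=\mathcal{A}_{n,p}\rtimes\mathbb{Z}$ with $\mathbb{Z}$ acting by the shift $\tau$, $(\tau\omega)_i=\omega_{i+1}$. ${\rm Sub}(G)$ is the compact space of subgroups of $G$ (topology from $\{0,1\}^G$). ${\rm IRS}(\mathcal{L}_{n,p})$ is the simplex of conjugation-invariant Borel probability measures on ${\rm Sub}(\mathcal{L}_{n,p})$ with the weak$^*$ topology; ${\rm IRS}_0(\mathcal{L}_{n,p})$ consists of those $\mu$ with $\mu(\{V: V\subset\mathcal{A}_{n,p}\})=1$ (equivalently, the projection of $V$ to $\mathbb{Z}$ is trivial $\mu$-a.s.). ${\rm IRS}_\tau(\mathcal{A}_{n,p})$ is the simplex of Borel probability measures on ${\rm Sub}(\mathcal{A}_{n,p})$ invariant under $H\mapsto\tau H$. *)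

theory Defs
  imports "HOL-Probability.Probability" "HOL-Algebra.Group"
begin

text \<open>Elements of A_{n,p}: functions omega :: int => nat => nat, omega i k is the k-th
coordinate (k < n) of the i-th component, a residue in {0..p-1}; finitely supported in i.\<close>

type_synonym aelt = "int \<Rightarrow> nat \<Rightarrow> nat"

definition A_carrier :: "nat \<Rightarrow> nat \<Rightarrow> aelt set" where
  "A_carrier n p = {\<omega>. (\<forall>i k. \<omega> i k < p) \<and> (\<forall>i k. n \<le> k \<longrightarrow> \<omega> i k = 0)
                     \<and> finite {i. \<exists>k. \<omega> i k \<noteq> 0}}"

definition A_add :: "nat \<Rightarrow> aelt \<Rightarrow> aelt \<Rightarrow> aelt" where
  "A_add p \<omega> \<omega>' = (\<lambda>i k. (\<omega> i k + \<omega>' i k) mod p)"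

definition A_zero :: aelt where
  "A_zero = (\<lambda>i k. 0)"

definition A_grp :: "nat \<Rightarrow> nat \<Rightarrow> aelt monoid" where
  "A_grp n p = \<lparr>carrier = A_carrier n p, mult = A_add p, one = A_zero\<rparr>"

definition shift :: "int \<Rightarrow> aelt \<Rightarrow> aelt" where
  "shift m \<omega> = (\<lambda>i. \<omega> (i + m))"

definition L_grp :: "nat \<Rightarrow> nat \<Rightarrow> (aelt \<times> int) monoid" where
  "L_grp n p = \<lparr>carrier = A_carrier n p \<times> UNIV,
                mult = (\<lambda>(a, m) (b, k). (A_add p a (shift m b), m + k)),
                one = (A_zero, 0)\<rparr>"

definition Sub :: "('g, 'b) monoid_scheme \<Rightarrow> 'g set set" where
  "Sub G = {H. subgroup H G}"

text \<open>Topology on Sub(G) induced from {0,1}^G (product topology): generated by the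
cylinder sets {H. g in H} and {H. g notin H}.\<close>
definition SubTop :: "('g, 'b) monoid_scheme \<Rightarrow> 'g set topology" where
  "SubTop G = subtopology
     (topology_generated_by ({{H. g \<in> H} | g. g \<in> carrier G} \<union> {{H. g \<notin> H} | g. g \<in> carrier G}))
     (Sub G)"

definition SubBorel :: "('g, 'b) monoid_scheme \<Rightarrow> 'g set measure" where
  "SubBorel G = sigma (Sub G) {U. openin (SubTop G) U}"

definition conjg :: "('g, 'b) monoid_scheme \<Rightarrow> 'g \<Rightarrow> 'g set \<Rightarrow> 'g set" where
  "conjg G g H = (\<lambda>h. g \<otimes>\<^bsub>G\<^esub> h \<otimes>\<^bsub>G\<^esub> inv\<^bsub>G\<^esub> g) ` H"

definition IRS :: "('g, 'b) monoid_scheme \<Rightarrow> 'g set measure set" where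
  "IRS G = {\<mu>. prob_space \<mu> \<and> sets \<mu> = sets (SubBorel G)
              \<and> (\<forall>g \<in> carrier G. distr \<mu> (SubBorel G) (conjg G g) = \<mu>)}"

definition A_in_L :: "nat \<Rightarrow> nat \<Rightarrow> (aelt \<times> int) set" where
  "A_in_L n p = A_carrier n p \<times> {0}"

definition IRS0 :: "nat \<Rightarrow> nat \<Rightarrow> (aelt \<times> int) set measure set" where
  "IRS0 n p = {\<mu> \<in> IRS (L_grp n p). measure \<mu> {V \<in> Sub (L_grp n p). V \<subseteq> A_in_L n p} = 1}"

definition IRS_tau :: "nat \<Rightarrow> nat \<Rightarrow> aelt set measure set" where
  "IRS_tau n p = {\<mu>. prob_space \<mu> \<and> sets \<mu> = sets (SubBorel (A_grp n p))
              \<and> distr \<mu> (SubBorel (A_grp n p)) (\<lambda>H. shift 1 ` H) = \<mu>}"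

definition pi2 :: "(aelt \<times> int) set \<Rightarrow> aelt set" where
  "pi2 V = {\<omega>. (\<omega>, 0) \<in> V}"

definition pi2_push :: "nat \<Rightarrow> nat \<Rightarrow> (aelt \<times> int) set measure \<Rightarrow> aelt set measure" where
  "pi2_push n p \<mu> = distr \<mu> (SubBorel (A_grp n p)) pi2"

definition mix :: "real \<Rightarrow> 'a measure \<Rightarrow> 'a measure \<Rightarrow> 'a measure" where
  "mix t \<mu> \<nu> = measure_of (space \<mu>) (sets \<mu>)
     (\<lambda>X. ennreal t * emeasure \<mu> X + ennreal (1 - t) * emeasure \<nu> X)"

definition wstar :: "'a topology \<Rightarrow> 'a measure topology" where
  "wstar T = topology_generated_by
     {{\<mu>. (\<integral>x. f x \<partial>\<mu>) \<in> U} | f U. continuous_map T euclideanreal f \<and> open U}"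

end

theory Submission
  imports Defs
begin


lemma shift_shift: "shift m (shift k \<omega>) = shift (m + k) \<omega>"
  by (simp add: shift_def ac_simps)

lemma shift_0[simp]: "shift 0 \<omega> = \<omega>" by (simp add: shift_def)

lemma finite_supp_shift:
  assumes "finite {i. \<exists>k. \<omega> i k \<noteq> 0}"
  shows "finite {i. \<exists>k. shift m \<omega> i k \<noteq> 0}"
proof -
  have "{i. \<exists>k. shift m \<omega> i k \<noteq> 0} = (\<lambda>i. i + m) -` {i. \<exists>k. \<omega> i k \<noteq> 0}"
    by (auto simp: shift_def)
  moreover have "finite ((\<lambda>i. i + m) -` {i. \<exists>k. \<omega> i k \<noteq> 0})"
    by (rule finite_vimageI[OF assms]) (auto simp: inj_on_def)
  ultimately show ?thesis by simp
qed

lemma shift_carrier: "\<omega> \<in> A_carrier n p \<Longrightarrow> shift m \<omega> \<in> A_carrier n p"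
  unfolding A_carrier_def using finite_supp_shift[of \<omega> m] by (auto simp: shift_def)

lemma A_add_carrier:
  assumes "p > 0" "a \<in> A_carrier n p" "b \<in> A_carrier n p"
  shows "A_add p a b \<in> A_carrier n p"
proof -
  have "{i. \<exists>k. A_add p a b i k \<noteq> 0} \<subseteq> {i. \<exists>k. a i k \<noteq> 0} \<union> {i. \<exists>k. b i k \<noteq> 0}"
  proof (rule subsetI, rule ccontr)
    fix i assume "i \<in> {i. \<exists>k. A_add p a b i k \<noteq> 0}" "i \<notin> {i. \<exists>k. a i k \<noteq> 0} \<union> {i. \<exists>k. b i k \<noteq> 0}"
    then show False by (simp add: A_add_def)
  qed
  moreover have "finite ({i. \<exists>k. a i k \<noteq> 0} \<union> {i. \<exists>k. b i k \<noteq> 0})"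
    using assms(2,3) by (simp add: A_carrier_def)
  ultimately have "finite {i. \<exists>k. A_add p a b i k \<noteq> 0}" by (rule finite_subset)
  then show ?thesis using assms unfolding A_carrier_def
    by (simp add: A_add_def mod_less_divisor[OF \<open>p>0\<close>])
qed

lemma A_zero_carrier: "p > 0 \<Longrightarrow> A_zero \<in> A_carrier n p"
  by (simp add: A_carrier_def A_zero_def)

lemma A_add_comm: "A_add p a b = A_add p b a"
  by (simp add: A_add_def add.commute)

lemma A_add_assoc: "A_add p (A_add p a b) c = A_add p a (A_add p b c)"
  by (simp add: A_add_def mod_add_left_eq mod_add_right_eq add.assoc)

lemma A_add_zero: "a \<in> A_carrier n p \<Longrightarrow> A_add p A_zero a = a"
  by (auto simp: A_add_def A_zero_def A_carrier_def)

lemma A_add_zero2: "a \<in> A_carrier n p \<Longrightarrow> A_add p a A_zero = a"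
  by (auto simp: A_add_def A_zero_def A_carrier_def)

definition A_neg :: "nat \<Rightarrow> aelt \<Rightarrow> aelt" where
  "A_neg p a = (\<lambda>i k. (p - a i k) mod p)"

lemma A_neg_carrier:
  assumes "p > 0" "a \<in> A_carrier n p" shows "A_neg p a \<in> A_carrier n p"
proof -
  have "{i. \<exists>k. A_neg p a i k \<noteq> 0} \<subseteq> {i. \<exists>k. a i k \<noteq> 0}"
  proof (rule subsetI, rule ccontr)
    fix i assume "i \<in> {i. \<exists>k. A_neg p a i k \<noteq> 0}" "i \<notin> {i. \<exists>k. a i k \<noteq> 0}"
    then show False by (simp add: A_neg_def)
  qed
  moreover have "finite {i. \<exists>k. a i k \<noteq> 0}"
    using assms(2) by (simp add: A_carrier_def)
  ultimately have "finite {i. \<exists>k. A_neg p a i k \<noteq> 0}" by (rule finite_subset)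
  then show ?thesis using assms unfolding A_carrier_def
    by (simp add: A_neg_def mod_less_divisor[OF \<open>p>0\<close>])
qed

lemma A_neg_add: "p > 0 \<Longrightarrow> a \<in> A_carrier n p \<Longrightarrow> A_add p (A_neg p a) a = A_zero"
  unfolding A_add_def A_neg_def A_zero_def A_carrier_def
proof (intro ext)
  fix i k assume "p > 0" "a \<in> {\<omega>. (\<forall>i k. \<omega> i k < p) \<and> (\<forall>i k. n \<le> k \<longrightarrow> \<omega> i k = 0) \<and> finite {i. \<exists>k. \<omega> i k \<noteq> 0}}"
  then have "a i k < p" by auto
  show "((p - a i k) mod p + a i k) mod p = 0"
  proof (cases "a i k = 0")
    case True then show ?thesis by simp
  next
    case False then have "(p - a i k) mod p = p - a i k" using \<open>a i k < p\<close> by simp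
    then show ?thesis using \<open>a i k < p\<close> by simp
  qed
qed

lemma shift_A_add: "shift m (A_add p a b) = A_add p (shift m a) (shift m b)"
  by (simp add: shift_def A_add_def)

lemma shift_zero[simp]: "shift m A_zero = A_zero"
  by (simp add: shift_def A_zero_def)


lemma A_group: assumes "p > 0" shows "group (A_grp n p)"
proof (rule groupI)
  fix x assume "x \<in> carrier (A_grp n p)"
  then show "\<exists>y\<in>carrier (A_grp n p). y \<otimes>\<^bsub>A_grp n p\<^esub> x = \<one>\<^bsub>A_grp n p\<^esub>"
    using assms A_neg_carrier A_neg_add by (simp add: A_grp_def) blast
qed (use assms in \<open>simp_all add: A_grp_def A_add_carrier A_zero_carrier A_add_assoc A_add_zero\<close>)

lemma A_comm_group: assumes "p > 0" shows "comm_group (A_grp n p)"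
  by (rule group.group_comm_groupI[OF A_group[OF assms]]) (simp add: A_grp_def A_add_comm)


lemma L_group: assumes "p > 0" shows "group (L_grp n p)"
proof (rule groupI)
  fix x y assume "x \<in> carrier (L_grp n p)" "y \<in> carrier (L_grp n p)"
  then show "x \<otimes>\<^bsub>L_grp n p\<^esub> y \<in> carrier (L_grp n p)"
    using assms by (auto simp: L_grp_def A_add_carrier shift_carrier split: prod.splits)
next
  show "\<one>\<^bsub>L_grp n p\<^esub> \<in> carrier (L_grp n p)" using assms by (simp add: L_grp_def A_zero_carrier)
next
  fix x y z assume "x \<in> carrier (L_grp n p)" "y \<in> carrier (L_grp n p)" "z \<in> carrier (L_grp n p)"
  then show "x \<otimes>\<^bsub>L_grp n p\<^esub> y \<otimes>\<^bsub>L_grp n p\<^esub> z = x \<otimes>\<^bsub>L_grp n p\<^esub> (y \<otimes>\<^bsub>L_grp n p\<^esub> z)"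
    by (auto simp: L_grp_def A_add_assoc shift_A_add shift_shift add.assoc split: prod.splits)
next
  fix x assume "x \<in> carrier (L_grp n p)"
  then show "\<one>\<^bsub>L_grp n p\<^esub> \<otimes>\<^bsub>L_grp n p\<^esub> x = x"
    by (auto simp: L_grp_def A_add_zero)
next
  fix x assume x: "x \<in> carrier (L_grp n p)"
  obtain a m where am: "x = (a, m)" by force
  with x have a: "a \<in> A_carrier n p" by (simp add: L_grp_def)
  have "A_add p (shift (- m) (A_neg p a)) (shift (- m) a) = A_zero"
    using assms a by (simp add: shift_A_add[symmetric] A_neg_add)
  then show "\<exists>y\<in>carrier (L_grp n p). y \<otimes>\<^bsub>L_grp n p\<^esub> x = \<one>\<^bsub>L_grp n p\<^esub>"
    using assms a am
    by (intro bexI[of _ "(shift (-m) (A_neg p a), -m)"]) (simp_all add: L_grp_def shift_carrier A_neg_carrier)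
qed

lemma L_mult: "(a, m) \<otimes>\<^bsub>L_grp n p\<^esub> (b, k) = (A_add p a (shift m b), m + k)"
  by (simp add: L_grp_def)

lemma A_mult: "a \<otimes>\<^bsub>A_grp n p\<^esub> b = A_add p a b"
  by (simp add: A_grp_def)


section \<open>Topology on Sub\<close>

lemma topspace_SubTop: "carrier G \<noteq> {} \<Longrightarrow> topspace (SubTop G) = Sub G"
  unfolding SubTop_def by auto

lemma SubTop_open_in: "g \<in> carrier G \<Longrightarrow> openin (SubTop G) {H \<in> Sub G. g \<in> H}"
  unfolding SubTop_def openin_subtopology
  by (rule exI[of _ "{H. g \<in> H}"]) (auto intro: topology_generated_by_Basis)

lemma SubTop_open_notin: "g \<in> carrier G \<Longrightarrow> openin (SubTop G) {H \<in> Sub G. g \<notin> H}"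
  unfolding SubTop_def openin_subtopology
  by (rule exI[of _ "{H. g \<notin> H}"]) (auto intro: topology_generated_by_Basis)

lemma cont_SubTop:
  assumes "carrier G \<noteq> {}" and "F ` topspace X \<subseteq> Sub G"
    and "\<And>g. g \<in> carrier G \<Longrightarrow> openin X {x \<in> topspace X. g \<in> F x}"
    and "\<And>g. g \<in> carrier G \<Longrightarrow> openin X {x \<in> topspace X. g \<notin> F x}"
  shows "continuous_map X (SubTop G) F"
  unfolding SubTop_def continuous_map_in_subtopology
proof (intro conjI continuous_on_generated_topo)
  fix U assume "U \<in> {{H. g \<in> H} |g. g \<in> carrier G} \<union> {{H. g \<notin> H} |g. g \<in> carrier G}"
  then show "openin X (F -` U \<inter> topspace X)"
  proof
    assume "U \<in> {{H. g \<in> H} |g. g \<in> carrier G}"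
    then obtain g where "g \<in> carrier G" "U = {H. g \<in> H}" by auto
    moreover have "F -` {H. g \<in> H} \<inter> topspace X = {x \<in> topspace X. g \<in> F x}" by auto
    ultimately show ?thesis using assms(3) by simp
  next
    assume "U \<in> {{H. g \<notin> H} |g. g \<in> carrier G}"
    then obtain g where "g \<in> carrier G" "U = {H. g \<notin> H}" by auto
    moreover have "F -` {H. g \<notin> H} \<inter> topspace X = {x \<in> topspace X. g \<notin> F x}" by auto
    ultimately show ?thesis using assms(4) by simp
  qed
next
  obtain g where g: "g \<in> carrier G" using assms(1) by auto
  show "F ` topspace X \<subseteq> \<Union> ({{H. g \<in> H} |g. g \<in> carrier G} \<union> {{H. g \<notin> H} |g. g \<in> carrier G})"
  proof
    fix K assume "K \<in> F ` topspace X"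
    show "K \<in> \<Union> ({{H. g \<in> H} |g. g \<in> carrier G} \<union> {{H. g \<notin> H} |g. g \<in> carrier G})"
    proof (cases "g \<in> K")
      case True then show ?thesis using g by blast
    next
      case False then show ?thesis using g by blast
    qed
  qed
qed (use assms(2) in auto)

lemma SubBorel_gen_subset: "{U. openin (SubTop G) U} \<subseteq> Pow (Sub G)"
  unfolding SubTop_def by (auto simp: openin_subtopology)

lemma space_SubBorel[simp]: "space (SubBorel G) = Sub G"
  unfolding SubBorel_def using SubBorel_gen_subset by (rule space_measure_of)

lemma sets_SubBorel: "sets (SubBorel G) = sigma_sets (Sub G) {U. openin (SubTop G) U}"
  unfolding SubBorel_def using SubBorel_gen_subset by (rule sets_measure_of)

lemma open_SubBorel: "openin (SubTop G) U \<Longrightarrow> U \<in> sets (SubBorel G)"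
  unfolding sets_SubBorel by (auto intro: sigma_sets.Basic)

lemma cont_meas:
  assumes "carrier G1 \<noteq> {}" "carrier G2 \<noteq> {}" "continuous_map (SubTop G1) (SubTop G2) F"
  shows "F \<in> measurable (SubBorel G1) (SubBorel G2)"
  unfolding SubBorel_def
proof (rule measurable_measure_of[OF SubBorel_gen_subset])
  show "F \<in> space (sigma (Sub G1) {U. openin (SubTop G1) U}) \<rightarrow> Sub G2"
    using assms continuous_map_image_subset_topspace[OF assms(3)]
    by (auto simp: topspace_SubTop SubBorel_def[symmetric])
next
  fix U assume "U \<in> {U. openin (SubTop G2) U}"
  then have "openin (SubTop G1) {x \<in> topspace (SubTop G1). F x \<in> U}"
    using assms(3) by (simp add: openin_continuous_map_preimage)
  moreover have "{x \<in> topspace (SubTop G1). F x \<in> U} = F -` U \<inter> space (SubBorel G1)"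
    using assms(1) by (auto simp: topspace_SubTop)
  ultimately show "F -` U \<inter> space (sigma (Sub G1) {U. openin (SubTop G1) U}) \<in> sets (sigma (Sub G1) {U. openin (SubTop G1) U})"
    by (metis SubBorel_def open_SubBorel)
qed

lemma cont_real_meas:
  assumes "carrier G \<noteq> {}" "continuous_map (SubTop G) euclideanreal f"
  shows "f \<in> borel_measurable (SubBorel G)"
proof (rule borel_measurableI)
  fix S :: "real set" assume "open S"
  then have "openin (SubTop G) {x \<in> topspace (SubTop G). f x \<in> S}"
    using assms(2) by (simp add: openin_continuous_map_preimage)
  moreover have "{x \<in> topspace (SubTop G). f x \<in> S} = f -` S \<inter> space (SubBorel G)"
    using assms(1) by (auto simp: topspace_SubTop)
  ultimately show "f -` S \<inter> space (SubBorel G) \<in> sets (SubBorel G)"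
    by (metis open_SubBorel)
qed


section \<open>Conjugation\<close>

lemma (in group) inv_cancel_l[simp]: "g \<in> carrier G \<Longrightarrow> z \<in> carrier G \<Longrightarrow> inv g \<otimes> (g \<otimes> z) = z"
  by (simp add: m_assoc[symmetric])

lemma (in group) inv_cancel_l2[simp]: "g \<in> carrier G \<Longrightarrow> z \<in> carrier G \<Longrightarrow> g \<otimes> (inv g \<otimes> z) = z"
  by (simp add: m_assoc[symmetric])

lemma (in group) conjg_hom:
  assumes g: "g \<in> carrier G" shows "group_hom G G (\<lambda>h. g \<otimes> h \<otimes> inv g)"
proof -
  have "(\<lambda>h. g \<otimes> h \<otimes> inv g) \<in> hom G G"
  proof (rule homI)
    fix x y assume x: "x \<in> carrier G" and y: "y \<in> carrier G"
    have "g \<otimes> x \<otimes> inv g \<otimes> (g \<otimes> y \<otimes> inv g) = g \<otimes> x \<otimes> (inv g \<otimes> g) \<otimes> y \<otimes> inv g"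
      using g x y by (simp add: m_assoc)
    also have "\<dots> = g \<otimes> (x \<otimes> y) \<otimes> inv g" using g x y by (simp add: m_assoc[symmetric])
    finally show "g \<otimes> (x \<otimes> y) \<otimes> inv g = g \<otimes> x \<otimes> inv g \<otimes> (g \<otimes> y \<otimes> inv g)" by simp
  qed (use g in simp)
  then show ?thesis by (simp add: group_hom_def group_hom_axioms_def is_group)
qed

lemma (in group) conjg_sub:
  assumes "g \<in> carrier G" "subgroup H G" shows "subgroup (conjg G g H) G"
  unfolding conjg_def using group_hom.subgroup_img_is_subgroup[OF conjg_hom[OF assms(1)] assms(2)] .

lemma (in group) conjg_mem:
  assumes g: "g \<in> carrier G" and H: "H \<subseteq> carrier G" and x: "x \<in> carrier G"
  shows "x \<in> conjg G g H \<longleftrightarrow> inv g \<otimes> x \<otimes> g \<in> H"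
proof
  assume "x \<in> conjg G g H"
  then obtain h where h: "h \<in> H" "x = g \<otimes> h \<otimes> inv g" by (auto simp: conjg_def)
  have hc: "h \<in> carrier G" using h H by auto
  have "inv g \<otimes> x \<otimes> g = (inv g \<otimes> g) \<otimes> h \<otimes> (inv g \<otimes> g)" using g hc h(2) by (simp add: m_assoc)
  also have "\<dots> = h" using g hc by simp
  finally have "inv g \<otimes> x \<otimes> g = h" .
  then show "inv g \<otimes> x \<otimes> g \<in> H" using h by simp
next
  assume a: "inv g \<otimes> x \<otimes> g \<in> H"
  have "g \<otimes> (inv g \<otimes> x \<otimes> g) \<otimes> inv g = (g \<otimes> inv g) \<otimes> x \<otimes> (g \<otimes> inv g)" using g x by (simp add: m_assoc)
  also have "\<dots> = x" using g x by simp
  finally have "g \<otimes> (inv g \<otimes> x \<otimes> g) \<otimes> inv g = x" .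
  then show "x \<in> conjg G g H" using a unfolding conjg_def by (metis image_eqI)
qed

lemma (in group) conjg_cont:
  assumes g: "g \<in> carrier G"
  shows "continuous_map (SubTop G) (SubTop G) (conjg G g)"
proof -
  have ne: "carrier G \<noteq> {}" by auto
  show ?thesis
proof (rule cont_SubTop)
  show "carrier G \<noteq> {}" by auto
  show "conjg G g ` topspace (SubTop G) \<subseteq> Sub G"
    using conjg_sub[OF g] by (auto simp: topspace_SubTop[OF ne] Sub_def)
next
  fix x assume x: "x \<in> carrier G"
  have "{H \<in> topspace (SubTop G). x \<in> conjg G g H} = {H \<in> Sub G. inv g \<otimes> x \<otimes> g \<in> H}"
    using conjg_mem[OF g _ x] by (auto simp: topspace_SubTop[OF ne] Sub_def subgroup.subset)
  then show "openin (SubTop G) {H \<in> topspace (SubTop G). x \<in> conjg G g H}"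
    using SubTop_open_in[of "inv g \<otimes> x \<otimes> g" G] g x by simp
  have "{H \<in> topspace (SubTop G). x \<notin> conjg G g H} = {H \<in> Sub G. inv g \<otimes> x \<otimes> g \<notin> H}"
    using conjg_mem[OF g _ x] by (auto simp: topspace_SubTop[OF ne] Sub_def subgroup.subset)
  then show "openin (SubTop G) {H \<in> topspace (SubTop G). x \<notin> conjg G g H}"
    using SubTop_open_notin[of "inv g \<otimes> x \<otimes> g" G] g x by simp
qed
qed



definition emb :: "aelt set \<Rightarrow> (aelt \<times> int) set" where
  "emb H = H \<times> {0}"

lemma pi2_emb[simp]: "pi2 (emb H) = H"
  by (auto simp: pi2_def emb_def)

lemma L_inv0:
  assumes p: "p > 0" and a: "a \<in> A_carrier n p"
  shows "inv\<^bsub>L_grp n p\<^esub> (a, 0) = (inv\<^bsub>A_grp n p\<^esub> a, 0)"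
proof -
  interpret L: group "L_grp n p" by (rule L_group[OF p])
  interpret A: group "A_grp n p" by (rule A_group[OF p])
  have ac: "a \<in> carrier (A_grp n p)" using a by (simp add: A_grp_def)
  have ic: "inv\<^bsub>A_grp n p\<^esub> a \<in> A_carrier n p" using A.inv_closed[OF ac] by (simp add: A_grp_def)
  have "inv\<^bsub>A_grp n p\<^esub> a \<otimes>\<^bsub>A_grp n p\<^esub> a = \<one>\<^bsub>A_grp n p\<^esub>" using A.l_inv[OF ac] .
  then have e: "A_add p (inv\<^bsub>A_grp n p\<^esub> a) a = A_zero" by (simp add: A_grp_def)
  show ?thesis
    by (rule L.inv_equality) (use e a ic in \<open>simp_all add: L_grp_def\<close>)
qed

lemma pi2_Sub:
  assumes p: "p > 0" and V: "V \<in> Sub (L_grp n p)"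
  shows "pi2 V \<in> Sub (A_grp n p)"
proof -
  interpret L: group "L_grp n p" by (rule L_group[OF p])
  interpret A: group "A_grp n p" by (rule A_group[OF p])
  have V': "subgroup V (L_grp n p)" using V by (simp add: Sub_def)
  have sub: "pi2 V \<subseteq> carrier (A_grp n p)"
    using subgroup.subset[OF V'] by (auto simp: pi2_def L_grp_def A_grp_def)
  show ?thesis unfolding Sub_def mem_Collect_eq
  proof (rule A.subgroupI[OF sub])
    have "\<one>\<^bsub>L_grp n p\<^esub> \<in> V" by (rule subgroup.one_closed[OF V'])
    then show "pi2 V \<noteq> {}" by (auto simp: pi2_def L_grp_def)
  next
    fix a assume a: "a \<in> pi2 V"
    then have "a \<in> A_carrier n p" using sub by (auto simp: A_grp_def)
    moreover have "inv\<^bsub>L_grp n p\<^esub> (a, 0) \<in> V" using a subgroup.m_inv_closed[OF V'] by (simp add: pi2_def)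
    ultimately show "inv\<^bsub>A_grp n p\<^esub> a \<in> pi2 V" using L_inv0[OF p] by (simp add: pi2_def)
  next
    fix a b assume "a \<in> pi2 V" "b \<in> pi2 V"
    then have "(a, 0) \<otimes>\<^bsub>L_grp n p\<^esub> (b, 0) \<in> V" using subgroup.m_closed[OF V'] by (simp add: pi2_def)
    then show "a \<otimes>\<^bsub>A_grp n p\<^esub> b \<in> pi2 V" by (simp add: pi2_def L_grp_def A_grp_def)
  qed
qed

lemma emb_Sub:
  assumes p: "p > 0" and H: "H \<in> Sub (A_grp n p)"
  shows "emb H \<in> Sub (L_grp n p)"
proof -
  interpret L: group "L_grp n p" by (rule L_group[OF p])
  interpret A: group "A_grp n p" by (rule A_group[OF p])
  have H': "subgroup H (A_grp n p)" using H by (simp add: Sub_def)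
  have sub: "emb H \<subseteq> carrier (L_grp n p)"
    using subgroup.subset[OF H'] by (auto simp: emb_def L_grp_def A_grp_def)
  show ?thesis unfolding Sub_def mem_Collect_eq
  proof (rule L.subgroupI[OF sub])
    have "\<one>\<^bsub>A_grp n p\<^esub> \<in> H" by (rule subgroup.one_closed[OF H'])
    then show "emb H \<noteq> {}" by (auto simp: emb_def)
  next
    fix x assume x: "x \<in> emb H"
    then obtain a where a: "x = (a, 0)" "a \<in> H" by (auto simp: emb_def)
    then have "a \<in> A_carrier n p" using subgroup.subset[OF H'] by (auto simp: A_grp_def)
    then show "inv\<^bsub>L_grp n p\<^esub> x \<in> emb H" using L_inv0[OF p] a subgroup.m_inv_closed[OF H'] 
      by (simp add: emb_def)
  next
    fix x y assume "x \<in> emb H" "y \<in> emb H"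
    then obtain a b where "x = (a, 0)" "y = (b, 0)" "a \<in> H" "b \<in> H" by (auto simp: emb_def)
    then show "x \<otimes>\<^bsub>L_grp n p\<^esub> y \<in> emb H" using subgroup.m_closed[OF H']
      by (simp add: emb_def L_grp_def A_grp_def)
  qed
qed

lemma shift_hom:
  assumes p: "p > 0" shows "group_hom (A_grp n p) (A_grp n p) (shift m)"
proof -
  have "shift m \<in> hom (A_grp n p) (A_grp n p)"
    by (rule homI) (simp_all add: A_grp_def shift_carrier shift_A_add)
  then show ?thesis using A_group[OF p] by (simp add: group_hom_def group_hom_axioms_def)
qed

lemma shiftS_Sub:
  assumes p: "p > 0" and H: "H \<in> Sub (A_grp n p)"
  shows "shift m ` H \<in> Sub (A_grp n p)"
  using group_hom.subgroup_img_is_subgroup[OF shift_hom[OF p]] H by (simp add: Sub_def)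

lemma shift_inv: "shift (- m) (shift m x) = x" "shift m (shift (- m) x) = x"
  by (simp_all add: shift_shift)

lemma mem_shiftS: "x \<in> shift m ` H \<longleftrightarrow> shift (- m) x \<in> H"
proof
  assume "x \<in> shift m ` H" then show "shift (- m) x \<in> H" using shift_inv by auto
next
  assume "shift (- m) x \<in> H" then show "x \<in> shift m ` H" using shift_inv(2)[of m x] by (metis image_eqI)
qed


lemma A_ne: "p > 0 \<Longrightarrow> carrier (A_grp n p) \<noteq> {}"
  using A_zero_carrier by (auto simp: A_grp_def)

lemma L_ne: "p > 0 \<Longrightarrow> carrier (L_grp n p) \<noteq> {}"
  using A_zero_carrier by (auto simp: L_grp_def)

lemma pi2_cont:
  assumes p: "p > 0"
  shows "continuous_map (SubTop (L_grp n p)) (SubTop (A_grp n p)) pi2"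
proof (rule cont_SubTop)
  show "carrier (A_grp n p) \<noteq> {}" using A_ne[OF p] .
  show "pi2 ` topspace (SubTop (L_grp n p)) \<subseteq> Sub (A_grp n p)"
    using pi2_Sub[OF p] by (auto simp: topspace_SubTop[OF L_ne[OF p]])
next
  fix g assume g: "g \<in> carrier (A_grp n p)"
  then have gc: "(g, 0) \<in> carrier (L_grp n p)" by (simp add: A_grp_def L_grp_def)
  have "{x \<in> topspace (SubTop (L_grp n p)). g \<in> pi2 x} = {H \<in> Sub (L_grp n p). (g, 0) \<in> H}"
    by (auto simp: topspace_SubTop[OF L_ne[OF p]] pi2_def)
  then show "openin (SubTop (L_grp n p)) {x \<in> topspace (SubTop (L_grp n p)). g \<in> pi2 x}"
    using SubTop_open_in[OF gc] by simp
  have "{x \<in> topspace (SubTop (L_grp n p)). g \<notin> pi2 x} = {H \<in> Sub (L_grp n p). (g, 0) \<notin> H}"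
    by (auto simp: topspace_SubTop[OF L_ne[OF p]] pi2_def)
  then show "openin (SubTop (L_grp n p)) {x \<in> topspace (SubTop (L_grp n p)). g \<notin> pi2 x}"
    using SubTop_open_notin[OF gc] by simp
qed

lemma emb_cont:
  assumes p: "p > 0"
  shows "continuous_map (SubTop (A_grp n p)) (SubTop (L_grp n p)) emb"
proof (rule cont_SubTop)
  show "carrier (L_grp n p) \<noteq> {}" using L_ne[OF p] .
  show "emb ` topspace (SubTop (A_grp n p)) \<subseteq> Sub (L_grp n p)"
    using emb_Sub[OF p] by (auto simp: topspace_SubTop[OF A_ne[OF p]])
next
  fix g assume g: "g \<in> carrier (L_grp n p)"
  obtain a m where am: "g = (a, m)" by force
  have ac: "a \<in> carrier (A_grp n p)" using g am by (simp add: A_grp_def L_grp_def)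
  show "openin (SubTop (A_grp n p)) {x \<in> topspace (SubTop (A_grp n p)). g \<in> emb x}"
  proof (cases "m = 0")
    case True
    then have "{x \<in> topspace (SubTop (A_grp n p)). g \<in> emb x} = {H \<in> Sub (A_grp n p). a \<in> H}"
      using am by (auto simp: topspace_SubTop[OF A_ne[OF p]] emb_def)
    then show ?thesis using SubTop_open_in[OF ac] by simp
  next
    case False
    then have "{x \<in> topspace (SubTop (A_grp n p)). g \<in> emb x} = {}"
      using am by (auto simp: emb_def)
    then show ?thesis by (metis openin_empty)
  qed
  show "openin (SubTop (A_grp n p)) {x \<in> topspace (SubTop (A_grp n p)). g \<notin> emb x}"
  proof (cases "m = 0")
    case True
    then have "{x \<in> topspace (SubTop (A_grp n p)). g \<notin> emb x} = {H \<in> Sub (A_grp n p). a \<notin> H}"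
      using am by (auto simp: topspace_SubTop[OF A_ne[OF p]] emb_def)
    then show ?thesis using SubTop_open_notin[OF ac] by simp
  next
    case False
    then have "{x \<in> topspace (SubTop (A_grp n p)). g \<notin> emb x} = topspace (SubTop (A_grp n p))"
      using am by (auto simp: emb_def)
    then show ?thesis by simp
  qed
qed

lemma shiftS_cont:
  assumes p: "p > 0"
  shows "continuous_map (SubTop (A_grp n p)) (SubTop (A_grp n p)) (\<lambda>H. shift m ` H)"
proof (rule cont_SubTop)
  show "carrier (A_grp n p) \<noteq> {}" using A_ne[OF p] .
  show "(\<lambda>H. shift m ` H) ` topspace (SubTop (A_grp n p)) \<subseteq> Sub (A_grp n p)"
    using shiftS_Sub[OF p] by (auto simp: topspace_SubTop[OF A_ne[OF p]])
next
  fix g assume g: "g \<in> carrier (A_grp n p)"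
  then have gc: "shift (- m) g \<in> carrier (A_grp n p)" by (simp add: A_grp_def shift_carrier)
  have "{x \<in> topspace (SubTop (A_grp n p)). g \<in> shift m ` x} = {H \<in> Sub (A_grp n p). shift (- m) g \<in> H}"
    by (auto simp: topspace_SubTop[OF A_ne[OF p]] mem_shiftS)
  then show "openin (SubTop (A_grp n p)) {x \<in> topspace (SubTop (A_grp n p)). g \<in> shift m ` x}"
    using SubTop_open_in[OF gc] by simp
  have "{x \<in> topspace (SubTop (A_grp n p)). g \<notin> shift m ` x} = {H \<in> Sub (A_grp n p). shift (- m) g \<notin> H}"
    by (auto simp: topspace_SubTop[OF A_ne[OF p]] mem_shiftS)
  then show "openin (SubTop (A_grp n p)) {x \<in> topspace (SubTop (A_grp n p)). g \<notin> shift m ` x}"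
    using SubTop_open_notin[OF gc] by simp
qed

lemma conj_pi2:
  assumes p: "p > 0" and V: "V \<subseteq> carrier (L_grp n p)"
  shows "pi2 (conjg (L_grp n p) (A_zero, 1) V) = shift 1 ` pi2 V"
proof -
  interpret L: group "L_grp n p" by (rule L_group[OF p])
  have z: "A_zero \<in> A_carrier n p" using A_zero_carrier[OF p] .
  have zz: "A_add p A_zero A_zero = A_zero" using A_add_zero[OF z] .
  have inv: "inv\<^bsub>L_grp n p\<^esub> (A_zero, 1) = (A_zero, -1)"
    by (rule L.inv_equality) (use z zz in \<open>simp_all add: L_grp_def\<close>)
  have c: "(A_zero, 1) \<otimes>\<^bsub>L_grp n p\<^esub> x \<otimes>\<^bsub>L_grp n p\<^esub> inv\<^bsub>L_grp n p\<^esub> (A_zero, 1) = (shift 1 (fst x), snd x)"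
    if x: "x \<in> carrier (L_grp n p)" for x
  proof -
    obtain a m where am: "x = (a, m)" by force
    have a: "a \<in> A_carrier n p" using x am by (simp add: L_grp_def)
    show ?thesis using am a shift_carrier[OF a, of 1]
      by (simp add: inv L_mult A_add_zero A_add_zero2)
  qed
  have "conjg (L_grp n p) (A_zero, 1) V = (\<lambda>x. (shift 1 (fst x), snd x)) ` V"
    unfolding conjg_def by (rule image_cong[OF refl]) (use c V in blast)
  moreover have "pi2 ((\<lambda>x. (shift 1 (fst x), snd x)) ` V) = shift 1 ` pi2 V"
  proof (rule Set.set_eqI)
    fix w
    have "w \<in> pi2 ((\<lambda>x. (shift 1 (fst x), snd x)) ` V) \<longleftrightarrow> (\<exists>x\<in>V. (w, 0) = (shift 1 (fst x), snd x))"
      by (simp add: pi2_def image_iff)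
    also have "\<dots> \<longleftrightarrow> (\<exists>a. (a, 0) \<in> V \<and> w = shift 1 a)"
      by (metis fst_conv prod.collapse prod.inject snd_conv)
    also have "\<dots> \<longleftrightarrow> w \<in> shift 1 ` pi2 V" by (auto simp: pi2_def)
    finally show "w \<in> pi2 ((\<lambda>x. (shift 1 (fst x), snd x)) ` V) \<longleftrightarrow> w \<in> shift 1 ` pi2 V" .
  qed
  ultimately show ?thesis by simp
qed

lemma conj_emb:
  assumes p: "p > 0" and H: "H \<subseteq> A_carrier n p" and g: "(a, m) \<in> carrier (L_grp n p)"
  shows "conjg (L_grp n p) (a, m) (emb H) = emb (shift m ` H)"
proof -
  interpret L: group "L_grp n p" by (rule L_group[OF p])
  have a: "a \<in> A_carrier n p" using g by (simp add: L_grp_def)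
  have c: "(a, m) \<otimes>\<^bsub>L_grp n p\<^esub> (h, 0) \<otimes>\<^bsub>L_grp n p\<^esub> inv\<^bsub>L_grp n p\<^esub> (a, m) = (shift m h, 0)"
    if h: "h \<in> H" for h
  proof -
    have hc: "h \<in> A_carrier n p" using h H by auto
    have x: "(h, 0) \<in> carrier (L_grp n p)" "(shift m h, 0) \<in> carrier (L_grp n p)"
      using hc shift_carrier[OF hc] by (simp_all add: L_grp_def)
    have "(a, m) \<otimes>\<^bsub>L_grp n p\<^esub> (h, 0) = (shift m h, 0) \<otimes>\<^bsub>L_grp n p\<^esub> (a, m)"
      by (simp add: L_grp_def A_add_comm)
    then have "(a, m) \<otimes>\<^bsub>L_grp n p\<^esub> (h, 0) \<otimes>\<^bsub>L_grp n p\<^esub> inv\<^bsub>L_grp n p\<^esub> (a, m)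
       = (shift m h, 0) \<otimes>\<^bsub>L_grp n p\<^esub> ((a, m) \<otimes>\<^bsub>L_grp n p\<^esub> inv\<^bsub>L_grp n p\<^esub> (a, m))"
      using g x by (simp add: L.m_assoc)
    also have "\<dots> = (shift m h, 0)" using g x by simp
    finally show ?thesis .
  qed
  show ?thesis unfolding conjg_def emb_def
  proof
    show "(\<lambda>h. (a, m) \<otimes>\<^bsub>L_grp n p\<^esub> h \<otimes>\<^bsub>L_grp n p\<^esub> inv\<^bsub>L_grp n p\<^esub> (a, m)) ` (H \<times> {0}) \<subseteq> shift m ` H \<times> {0::int}"
    proof
      fix y assume "y \<in> (\<lambda>h. (a, m) \<otimes>\<^bsub>L_grp n p\<^esub> h \<otimes>\<^bsub>L_grp n p\<^esub> inv\<^bsub>L_grp n p\<^esub> (a, m)) ` (H \<times> {0})"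
      then obtain h where h: "h \<in> H" "y = (a, m) \<otimes>\<^bsub>L_grp n p\<^esub> (h, 0) \<otimes>\<^bsub>L_grp n p\<^esub> inv\<^bsub>L_grp n p\<^esub> (a, m)"
        by blast
      then have "y = (shift m h, 0)" using c[OF h(1)] by simp
      then show "y \<in> shift m ` H \<times> {0::int}" using h(1) by blast
    qed
    show "shift m ` H \<times> {0::int} \<subseteq> (\<lambda>h. (a, m) \<otimes>\<^bsub>L_grp n p\<^esub> h \<otimes>\<^bsub>L_grp n p\<^esub> inv\<^bsub>L_grp n p\<^esub> (a, m)) ` (H \<times> {0})"
    proof
      fix y assume "y \<in> shift m ` H \<times> {0::int}"
      then obtain h where h: "h \<in> H" "y = (shift m h, 0)" by auto
      show "y \<in> (\<lambda>h. (a, m) \<otimes>\<^bsub>L_grp n p\<^esub> h \<otimes>\<^bsub>L_grp n p\<^esub> inv\<^bsub>L_grp n p\<^esub> (a, m)) ` (H \<times> {0})"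
      proof (rule image_eqI[of _ _ "(h, 0)"])
        show "y = (a, m) \<otimes>\<^bsub>L_grp n p\<^esub> (h, 0) \<otimes>\<^bsub>L_grp n p\<^esub> inv\<^bsub>L_grp n p\<^esub> (a, m)"
          using c[OF h(1)] h(2) by simp
        show "(h, 0) \<in> H \<times> {0}" using h(1) by simp
      qed
    qed
  qed
qed



lemma mix_facts:
  assumes ss: "sets \<nu> = sets \<mu>"
  shows "sets (mix t \<mu> \<nu>) = sets \<mu>" "space (mix t \<mu> \<nu>) = space \<mu>"
    and "X \<in> sets \<mu> \<Longrightarrow> emeasure (mix t \<mu> \<nu>) X = ennreal t * emeasure \<mu> X + ennreal (1 - t) * emeasure \<nu> X"
proof -
  have sub: "sets \<mu> \<subseteq> Pow (space \<mu>)" by (rule sets.space_closed)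
  show s: "sets (mix t \<mu> \<nu>) = sets \<mu>"
    unfolding mix_def using sets_measure_of[OF sub] sets.sigma_sets_eq by simp
  show "space (mix t \<mu> \<nu>) = space \<mu>"
    unfolding mix_def using space_measure_of[OF sub] by simp
  assume X: "X \<in> sets \<mu>"
  show "emeasure (mix t \<mu> \<nu>) X = ennreal t * emeasure \<mu> X + ennreal (1 - t) * emeasure \<nu> X"
    unfolding mix_def
  proof (rule emeasure_measure_of_sigma[OF sets.sigma_algebra_axioms _ _ X])
    show "positive (sets \<mu>) (\<lambda>X. ennreal t * emeasure \<mu> X + ennreal (1 - t) * emeasure \<nu> X)"
      by (simp add: positive_def)
    show "countably_additive (sets \<mu>) (\<lambda>X. ennreal t * emeasure \<mu> X + ennreal (1 - t) * emeasure \<nu> X)"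
    proof (rule countably_additiveI)
      fix A :: "nat \<Rightarrow> _" assume A: "range A \<subseteq> sets \<mu>" "disjoint_family A" "\<Union> (range A) \<in> sets \<mu>"
      have A': "range A \<subseteq> sets \<nu>" using A ss by simp
      have "(\<Sum>i. ennreal t * emeasure \<mu> (A i) + ennreal (1 - t) * emeasure \<nu> (A i))
          = (\<Sum>i. ennreal t * emeasure \<mu> (A i)) + (\<Sum>i. ennreal (1 - t) * emeasure \<nu> (A i))"
        by (rule suminf_add[symmetric]) (simp_all add: summableI)
      also have "\<dots> = ennreal t * emeasure \<mu> (\<Union> (range A)) + ennreal (1 - t) * emeasure \<nu> (\<Union> (range A))"
        using suminf_emeasure[OF A(1,2)] suminf_emeasure[OF A' A(2)] by simp
      finally show "(\<Sum>i. ennreal t * emeasure \<mu> (A i) + ennreal (1 - t) * emeasure \<nu> (A i))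
          = ennreal t * emeasure \<mu> (\<Union> (range A)) + ennreal (1 - t) * emeasure \<nu> (\<Union> (range A))" .
    qed
  qed
qed

lemma meas_cong:
  assumes "sets \<mu> = sets M" "f \<in> measurable M N" shows "f \<in> measurable \<mu> N"
  using assms measurable_cong_sets[OF assms(1) refl] by simp

lemma wstar_gens_UNIV:
  "\<Union> {{\<mu>. (\<integral>x. f x \<partial>\<mu>) \<in> U} | f U. continuous_map T euclideanreal f \<and> open U} = UNIV"
proof -
  have "UNIV \<in> {{\<mu>. (\<integral>x. f x \<partial>\<mu>) \<in> U} | f U. continuous_map T euclideanreal f \<and> open U}"
    by (rule CollectI, rule exI[of _ "\<lambda>x. 0"], rule exI[of _ UNIV]) simp
  then show ?thesis by blast
qed

lemma topspace_wstar[simp]: "topspace (wstar T) = UNIV"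
  unfolding wstar_def topology_generated_by_topspace by (rule wstar_gens_UNIV)

lemma wstar_cont:
  assumes img: "F ` S1 \<subseteq> S2"
    and tr: "\<And>f. continuous_map T2 euclideanreal f \<Longrightarrow>
        \<exists>f'. continuous_map T1 euclideanreal f' \<and> (\<forall>\<mu>\<in>S1. (\<integral>x. f x \<partial>(F \<mu>)) = (\<integral>x. f' x \<partial>\<mu>))"
  shows "continuous_map (subtopology (wstar T1) S1) (subtopology (wstar T2) S2) F"
  unfolding continuous_map_in_subtopology
proof (intro conjI)
  have ts: "topspace (subtopology (wstar T1) S1) = S1" by simp
  show "F \<in> topspace (subtopology (wstar T1) S1) \<rightarrow> S2" using img by auto
  show "continuous_map (subtopology (wstar T1) S1) (wstar T2) F"
    unfolding wstar_def[of T2]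
  proof (rule continuous_on_generated_topo)
    fix U assume "U \<in> {{\<mu>. (\<integral>x. f x \<partial>\<mu>) \<in> U} | f U. continuous_map T2 euclideanreal f \<and> open U}"
    then obtain f V where U: "U = {\<mu>. (\<integral>x. f x \<partial>\<mu>) \<in> V}" and f: "continuous_map T2 euclideanreal f" and V: "open V"
      by blast
    obtain f' where f': "continuous_map T1 euclideanreal f'" and eq: "\<forall>\<mu>\<in>S1. (\<integral>x. f x \<partial>(F \<mu>)) = (\<integral>x. f' x \<partial>\<mu>)"
      using tr[OF f] by blast
    have "openin (wstar T1) {\<mu>. (\<integral>x. f' x \<partial>\<mu>) \<in> V}"
      unfolding wstar_def by (rule topology_generated_by_Basis) (use f' V in blast)
    then have "openin (subtopology (wstar T1) S1) ({\<mu>. (\<integral>x. f' x \<partial>\<mu>) \<in> V} \<inter> S1)"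
      by (rule openin_subtopology_Int)
    moreover have "F -` U \<inter> topspace (subtopology (wstar T1) S1) = {\<mu>. (\<integral>x. f' x \<partial>\<mu>) \<in> V} \<inter> S1"
      using eq U by auto
    ultimately show "openin (subtopology (wstar T1) S1) (F -` U \<inter> topspace (subtopology (wstar T1) S1))"
      by simp
  qed (simp add: wstar_gens_UNIV)
qed

context
  fixes n p :: nat
  assumes p: "p > 0"
begin

abbreviation "LG \<equiv> L_grp n p"
abbreviation "AG \<equiv> A_grp n p"

lemma pi2_meas: "pi2 \<in> measurable (SubBorel LG) (SubBorel AG)"
  by (rule cont_meas[OF L_ne[OF p] A_ne[OF p] pi2_cont[OF p]])

lemma emb_meas: "emb \<in> measurable (SubBorel AG) (SubBorel LG)"
  by (rule cont_meas[OF A_ne[OF p] L_ne[OF p] emb_cont[OF p]])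

lemma shiftS_meas: "(\<lambda>H. shift m ` H) \<in> measurable (SubBorel AG) (SubBorel AG)"
  by (rule cont_meas[OF A_ne[OF p] A_ne[OF p] shiftS_cont[OF p]])

lemma conjg_meas: "g \<in> carrier LG \<Longrightarrow> conjg LG g \<in> measurable (SubBorel LG) (SubBorel LG)"
  by (rule cont_meas[OF L_ne[OF p] L_ne[OF p] group.conjg_cont[OF L_group[OF p]]])

lemma part1:
  assumes mu: "\<mu> \<in> IRS LG" shows "pi2_push n p \<mu> \<in> IRS_tau n p"
proof -
  have ps: "prob_space \<mu>" and ss: "sets \<mu> = sets (SubBorel LG)"
    and inv: "\<And>g. g \<in> carrier LG \<Longrightarrow> distr \<mu> (SubBorel LG) (conjg LG g) = \<mu>"
    using mu by (auto simp: IRS_def)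
  have sp: "space \<mu> = Sub LG" using sets_eq_imp_space_eq[OF ss] by simp
  have pm: "pi2 \<in> measurable \<mu> (SubBorel AG)" by (rule meas_cong[OF ss pi2_meas])
  have g: "(A_zero, 1) \<in> carrier LG" using A_zero_carrier[OF p] by (simp add: L_grp_def)
  have cm: "conjg LG (A_zero, 1) \<in> measurable \<mu> (SubBorel LG)" by (rule meas_cong[OF ss conjg_meas[OF g]])
  have "distr (pi2_push n p \<mu>) (SubBorel AG) (\<lambda>H. shift 1 ` H) = distr \<mu> (SubBorel AG) ((\<lambda>H. shift 1 ` H) \<circ> pi2)"
    unfolding pi2_push_def by (rule distr_distr[OF shiftS_meas pm])
  also have "\<dots> = distr \<mu> (SubBorel AG) (pi2 \<circ> conjg LG (A_zero, 1))"
  proof (rule distr_cong[OF refl refl])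
    fix V assume "V \<in> space \<mu>"
    then have "V \<subseteq> carrier LG" using sp by (auto simp: Sub_def subgroup.subset)
    then show "((\<lambda>H. shift 1 ` H) \<circ> pi2) V = (pi2 \<circ> conjg LG (A_zero, 1)) V"
      using conj_pi2[OF p] by simp
  qed
  also have "\<dots> = distr (distr \<mu> (SubBorel LG) (conjg LG (A_zero, 1))) (SubBorel AG) pi2"
    by (rule distr_distr[OF pi2_meas cm, symmetric])
  also have "\<dots> = pi2_push n p \<mu>" using inv[OF g] by (simp add: pi2_push_def)
  finally show ?thesis
    unfolding IRS_tau_def pi2_push_def using prob_space.prob_space_distr[OF ps pm] by simp
qed

lemma part2:
  assumes mu: "\<mu> \<in> IRS LG" and nu: "\<nu> \<in> IRS LG"
  shows "pi2_push n p (mix t \<mu> \<nu>) = mix t (pi2_push n p \<mu>) (pi2_push n p \<nu>)"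
proof -
  have ssm: "sets \<mu> = sets (SubBorel LG)" and ssn: "sets \<nu> = sets (SubBorel LG)"
    using mu nu by (auto simp: IRS_def)
  have ss: "sets \<nu> = sets \<mu>" using ssm ssn by simp
  have spm: "space \<mu> = Sub LG" using sets_eq_imp_space_eq[OF ssm] by simp
  have spn: "space \<nu> = Sub LG" using sets_eq_imp_space_eq[OF ssn] by simp
  have pmm: "pi2 \<in> measurable \<mu> (SubBorel AG)" by (rule meas_cong[OF ssm pi2_meas])
  have pmn: "pi2 \<in> measurable \<nu> (SubBorel AG)" by (rule meas_cong[OF ssn pi2_meas])
  have ssx: "sets (mix t \<mu> \<nu>) = sets (SubBorel LG)" using mix_facts(1)[OF ss] ssm by simp
  have pmx: "pi2 \<in> measurable (mix t \<mu> \<nu>) (SubBorel AG)" by (rule meas_cong[OF ssx pi2_meas])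
  have ss2: "sets (pi2_push n p \<nu>) = sets (pi2_push n p \<mu>)" by (simp add: pi2_push_def)
  show ?thesis
  proof (rule measure_eqI)
    show "sets (pi2_push n p (mix t \<mu> \<nu>)) = sets (mix t (pi2_push n p \<mu>) (pi2_push n p \<nu>))"
      using mix_facts(1)[OF ss2] by (simp add: pi2_push_def)
  next
    fix X assume X: "X \<in> sets (pi2_push n p (mix t \<mu> \<nu>))"
    then have XA: "X \<in> sets (SubBorel AG)" by (simp add: pi2_push_def)
    have pre: "pi2 -` X \<inter> Sub LG \<in> sets \<mu>"
      using measurable_sets[OF pmm XA] spm by simp
    have "emeasure (pi2_push n p (mix t \<mu> \<nu>)) X = emeasure (mix t \<mu> \<nu>) (pi2 -` X \<inter> Sub LG)"
      unfolding pi2_push_def using emeasure_distr[OF pmx XA] mix_facts(2)[OF ss] spm by simp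
    also have "\<dots> = ennreal t * emeasure \<mu> (pi2 -` X \<inter> Sub LG) + ennreal (1 - t) * emeasure \<nu> (pi2 -` X \<inter> Sub LG)"
      by (rule mix_facts(3)[OF ss pre])
    also have "\<dots> = ennreal t * emeasure (pi2_push n p \<mu>) X + ennreal (1 - t) * emeasure (pi2_push n p \<nu>) X"
      unfolding pi2_push_def using emeasure_distr[OF pmm XA] emeasure_distr[OF pmn XA] spm spn by simp
    also have "\<dots> = emeasure (mix t (pi2_push n p \<mu>) (pi2_push n p \<nu>)) X"
      by (rule mix_facts(3)[OF ss2, symmetric]) (simp add: pi2_push_def XA)
    finally show "emeasure (pi2_push n p (mix t \<mu> \<nu>)) X = emeasure (mix t (pi2_push n p \<mu>) (pi2_push n p \<nu>)) X" .
  qed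
qed

definition "epush \<nu> = distr \<nu> (SubBorel LG) emb"

definition "S0 = {V \<in> Sub LG. V \<subseteq> A_in_L n p}"

lemma S0_sets: "S0 \<in> sets (SubBorel LG)"
proof -
  define Opn where "Opn = \<Union> {{V \<in> Sub LG. g \<in> V} | g. g \<in> carrier LG \<and> g \<notin> A_in_L n p}"
  have "openin (SubTop LG) Opn" unfolding Opn_def
    by (rule openin_Union) (auto intro: SubTop_open_in)
  then have "Opn \<in> sets (SubBorel LG)" by (rule open_SubBorel)
  then have "space (SubBorel LG) - Opn \<in> sets (SubBorel LG)" by (rule sets.compl_sets)
  moreover have "space (SubBorel LG) - Opn = S0"
  proof (rule Set.set_eqI)
    fix V
    show "V \<in> space (SubBorel LG) - Opn \<longleftrightarrow> V \<in> S0"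
    proof
      assume V: "V \<in> space (SubBorel LG) - Opn"
      then have VS: "V \<in> Sub LG" by simp
      then have "V \<subseteq> carrier LG" by (simp add: Sub_def subgroup.subset)
      moreover have "\<And>g. g \<in> V \<Longrightarrow> g \<in> carrier LG \<Longrightarrow> g \<in> A_in_L n p"
        using V VS unfolding Opn_def by blast
      ultimately show "V \<in> S0" using VS unfolding S0_def by blast
    next
      assume "V \<in> S0"
      then show "V \<in> space (SubBorel LG) - Opn" unfolding S0_def Opn_def by auto
    qed
  qed
  ultimately show ?thesis by simp
qed

lemma shift_inv_all:
  assumes nu: "\<nu> \<in> IRS_tau n p"
  shows "distr \<nu> (SubBorel AG) (\<lambda>H. shift m ` H) = \<nu>"
proof -
  have ss: "sets \<nu> = sets (SubBorel AG)" and inv1: "distr \<nu> (SubBorel AG) (\<lambda>H. shift 1 ` H) = \<nu>"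
    using nu by (auto simp: IRS_tau_def)
  have sm: "\<And>k. (\<lambda>H. shift k ` H) \<in> measurable \<nu> (SubBorel AG)"
    by (rule meas_cong[OF ss shiftS_meas])
  have id: "distr \<nu> (SubBorel AG) (\<lambda>x. x) = \<nu>" by (rule distr_id2) (simp add: ss)
  have comp: "(\<lambda>H. shift a ` H) \<circ> (\<lambda>H. shift b ` H) = (\<lambda>H. shift (a + b) ` H)" for a b
    by (rule ext) (simp add: image_comp o_def shift_shift)
  have nat: "distr \<nu> (SubBorel AG) (\<lambda>H. shift (int k) ` H) = \<nu>" for k
  proof (induction k)
    case 0
    have "(\<lambda>H. shift (int 0) ` H) = (\<lambda>x. x)" by (rule ext) simp
    then show ?case using id by simp
  next
    case (Suc k)
    have "distr \<nu> (SubBorel AG) (\<lambda>H. shift (int (Suc k)) ` H)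
        = distr \<nu> (SubBorel AG) ((\<lambda>H. shift 1 ` H) \<circ> (\<lambda>H. shift (int k) ` H))"
      by (simp add: comp add.commute)
    also have "\<dots> = distr (distr \<nu> (SubBorel AG) (\<lambda>H. shift (int k) ` H)) (SubBorel AG) (\<lambda>H. shift 1 ` H)"
      by (rule distr_distr[OF shiftS_meas sm, symmetric])
    also have "\<dots> = \<nu>" using Suc.IH inv1 by simp
    finally show ?case .
  qed
  show ?thesis
  proof (cases "m \<ge> 0")
    case True
    then have "m = int (nat m)" by simp
    then show ?thesis using nat[of "nat m"] by simp
  next
    case False
    define k where "k = nat (- m)"
    have m: "m = - int k" using False unfolding k_def by simp
    have "distr \<nu> (SubBorel AG) (\<lambda>H. shift m ` H)
        = distr (distr \<nu> (SubBorel AG) (\<lambda>H. shift (int k) ` H)) (SubBorel AG) (\<lambda>H. shift m ` H)"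
      using nat[of k] by simp
    also have "\<dots> = distr \<nu> (SubBorel AG) ((\<lambda>H. shift m ` H) \<circ> (\<lambda>H. shift (int k) ` H))"
      by (rule distr_distr[OF shiftS_meas sm])
    also have "(\<lambda>H. shift m ` H) \<circ> (\<lambda>H. shift (int k) ` H) = (\<lambda>x. x)"
      unfolding comp m by (rule ext) simp
    finally show ?thesis using id by simp
  qed
qed

lemma epush_IRS0:
  assumes nu: "\<nu> \<in> IRS_tau n p" shows "epush \<nu> \<in> IRS0 n p"
proof -
  have ps: "prob_space \<nu>" and ss: "sets \<nu> = sets (SubBorel AG)"
    using nu by (auto simp: IRS_tau_def)
  have sp: "space \<nu> = Sub AG" using sets_eq_imp_space_eq[OF ss] by simp
  have em: "emb \<in> measurable \<nu> (SubBorel LG)" by (rule meas_cong[OF ss emb_meas])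
  have inv: "distr (epush \<nu>) (SubBorel LG) (conjg LG g) = epush \<nu>" if g: "g \<in> carrier LG" for g
  proof -
    obtain a m where am: "g = (a, m)" by force
    have "distr (epush \<nu>) (SubBorel LG) (conjg LG g) = distr \<nu> (SubBorel LG) (conjg LG g \<circ> emb)"
      unfolding epush_def by (rule distr_distr[OF conjg_meas[OF g] em])
    also have "\<dots> = distr \<nu> (SubBorel LG) (emb \<circ> (\<lambda>H. shift m ` H))"
    proof (rule distr_cong[OF refl refl])
      fix H assume "H \<in> space \<nu>"
      then have "H \<subseteq> carrier AG" using sp by (simp add: Sub_def subgroup.subset)
      then have "H \<subseteq> A_carrier n p" by (simp add: A_grp_def)
      then show "(conjg LG g \<circ> emb) H = (emb \<circ> (\<lambda>H. shift m ` H)) H"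
        using conj_emb[OF p _ g[unfolded am]] am by simp
    qed
    also have "\<dots> = distr (distr \<nu> (SubBorel AG) (\<lambda>H. shift m ` H)) (SubBorel LG) emb"
      by (rule distr_distr[OF emb_meas meas_cong[OF ss shiftS_meas], symmetric])
    also have "\<dots> = epush \<nu>" using shift_inv_all[OF nu] by (simp add: epush_def)
    finally show ?thesis .
  qed
  have pre: "emb -` S0 \<inter> space \<nu> = space \<nu>"
  proof -
    have "emb H \<in> S0" if "H \<in> Sub AG" for H
    proof -
      have "H \<subseteq> carrier AG" using that by (simp add: Sub_def subgroup.subset)
      then have "H \<subseteq> A_carrier n p" by (simp add: A_grp_def)
      then show ?thesis using emb_Sub[OF p that] by (auto simp: S0_def emb_def A_in_L_def)
    qed
    then show ?thesis using sp by auto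
  qed
  have "measure (epush \<nu>) S0 = measure \<nu> (emb -` S0 \<inter> space \<nu>)"
    unfolding epush_def by (rule measure_distr[OF em S0_sets])
  also have "\<dots> = 1" using pre prob_space.prob_space[OF ps] by simp
  finally have m1: "measure (epush \<nu>) S0 = 1" .
  show ?thesis
    unfolding IRS0_def IRS_def
    using prob_space.prob_space_distr[OF ps em] inv m1 by (simp add: epush_def S0_def)
qed

lemma inv_1:
  assumes mu: "\<mu> \<in> IRS0 n p" shows "epush (pi2_push n p \<mu>) = \<mu>"
proof -
  have ps: "prob_space \<mu>" and ss: "sets \<mu> = sets (SubBorel LG)" and m1: "measure \<mu> S0 = 1"
    using mu by (auto simp: IRS0_def IRS_def S0_def)
  have sp: "space \<mu> = Sub LG" using sets_eq_imp_space_eq[OF ss] by simp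
  have pm: "pi2 \<in> measurable \<mu> (SubBorel AG)" by (rule meas_cong[OF ss pi2_meas])
  have AE: "AE V in \<mu>. V \<in> S0" using prob_space.AE_prob_1[OF ps m1] .
  have "epush (pi2_push n p \<mu>) = distr \<mu> (SubBorel LG) (emb \<circ> pi2)"
    unfolding epush_def pi2_push_def by (rule distr_distr[OF emb_meas pm])
  also have "\<dots> = distr \<mu> (SubBorel LG) (\<lambda>x. x)"
  proof (rule distr_cong_AE[OF refl refl])
    show "AE x in \<mu>. (emb \<circ> pi2) x = x"
    proof (rule AE_mp[OF AE AE_I2], rule impI)
      fix V assume "V \<in> S0"
      then have "V \<subseteq> A_carrier n p \<times> {0}" by (simp add: S0_def A_in_L_def)
      then show "(emb \<circ> pi2) V = V" by (auto simp: emb_def pi2_def)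
    qed
    show "emb \<circ> pi2 \<in> measurable \<mu> (SubBorel LG)" using measurable_comp[OF pm emb_meas] .
    show "(\<lambda>x. x) \<in> measurable \<mu> (SubBorel LG)" by (rule measurable_ident_sets[OF ss])
  qed
  also have "\<dots> = \<mu>" by (rule distr_id2) (simp add: ss)
  finally show ?thesis .
qed

lemma inv_2:
  assumes nu: "\<nu> \<in> IRS_tau n p" shows "pi2_push n p (epush \<nu>) = \<nu>"
proof -
  have ss: "sets \<nu> = sets (SubBorel AG)" using nu by (auto simp: IRS_tau_def)
  have em: "emb \<in> measurable \<nu> (SubBorel LG)" by (rule meas_cong[OF ss emb_meas])
  have "pi2_push n p (epush \<nu>) = distr \<nu> (SubBorel AG) (pi2 \<circ> emb)"
    unfolding epush_def pi2_push_def by (rule distr_distr[OF pi2_meas em])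
  also have "\<dots> = distr \<nu> (SubBorel AG) (\<lambda>x. x)"
    by (rule distr_cong) simp_all
  also have "\<dots> = \<nu>" by (rule distr_id2) (simp add: ss)
  finally show ?thesis .
qed

lemma cont_pi2_push:
  "continuous_map (subtopology (wstar (SubTop LG)) (IRS0 n p))
     (subtopology (wstar (SubTop AG)) (IRS_tau n p)) (pi2_push n p)"
proof (rule wstar_cont)
  show "pi2_push n p ` IRS0 n p \<subseteq> IRS_tau n p" using part1 by (auto simp: IRS0_def)
next
  fix f assume f: "continuous_map (SubTop AG) euclideanreal f"
  show "\<exists>f'. continuous_map (SubTop LG) euclideanreal f' \<and>
      (\<forall>\<mu>\<in>IRS0 n p. (\<integral>x. f x \<partial>(pi2_push n p \<mu>)) = (\<integral>x. f' x \<partial>\<mu>))"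
  proof (intro exI conjI ballI)
    show "continuous_map (SubTop LG) euclideanreal (f \<circ> pi2)"
      by (rule continuous_map_compose[OF pi2_cont[OF p] f])
    fix \<mu> assume "\<mu> \<in> IRS0 n p"
    then have ss: "sets \<mu> = sets (SubBorel LG)" by (auto simp: IRS0_def IRS_def)
    show "(\<integral>x. f x \<partial>(pi2_push n p \<mu>)) = (\<integral>x. (f \<circ> pi2) x \<partial>\<mu>)"
      unfolding pi2_push_def
      using integral_distr[OF meas_cong[OF ss pi2_meas] cont_real_meas[OF A_ne[OF p] f]] by simp
  qed
qed

lemma cont_epush:
  "continuous_map (subtopology (wstar (SubTop AG)) (IRS_tau n p))
     (subtopology (wstar (SubTop LG)) (IRS0 n p)) epush"
proof (rule wstar_cont)
  show "epush ` IRS_tau n p \<subseteq> IRS0 n p" using epush_IRS0 by auto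
next
  fix f assume f: "continuous_map (SubTop LG) euclideanreal f"
  show "\<exists>f'. continuous_map (SubTop AG) euclideanreal f' \<and>
      (\<forall>\<mu>\<in>IRS_tau n p. (\<integral>x. f x \<partial>(epush \<mu>)) = (\<integral>x. f' x \<partial>\<mu>))"
  proof (intro exI conjI ballI)
    show "continuous_map (SubTop AG) euclideanreal (f \<circ> emb)"
      by (rule continuous_map_compose[OF emb_cont[OF p] f])
    fix \<mu> assume "\<mu> \<in> IRS_tau n p"
    then have ss: "sets \<mu> = sets (SubBorel AG)" by (auto simp: IRS_tau_def)
    show "(\<integral>x. f x \<partial>(epush \<mu>)) = (\<integral>x. (f \<circ> emb) x \<partial>\<mu>)"
      unfolding epush_def
      using integral_distr[OF meas_cong[OF ss emb_meas] cont_real_meas[OF L_ne[OF p] f]] by simp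
  qed
qed

lemma part3:
  "homeomorphic_map (subtopology (wstar (SubTop LG)) (IRS0 n p))
     (subtopology (wstar (SubTop AG)) (IRS_tau n p)) (pi2_push n p)"
  unfolding homeomorphic_map_maps homeomorphic_maps_def
  using cont_pi2_push cont_epush inv_1 inv_2 by auto

end


theorem lemma3p2:
  fixes n p :: nat
  assumes "prime p" and "n \<ge> 1"
  shows "(\<forall>\<mu> \<in> IRS (L_grp n p). pi2_push n p \<mu> \<in> IRS_tau n p)
       \<and> (\<forall>\<mu> \<in> IRS (L_grp n p). \<forall>\<nu> \<in> IRS (L_grp n p). \<forall>t \<in> {0..1::real}.
            pi2_push n p (mix t \<mu> \<nu>) = mix t (pi2_push n p \<mu>) (pi2_push n p \<nu>))
       \<and> homeomorphic_map
           (subtopology (wstar (SubTop (L_grp n p))) (IRS0 n p))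
           (subtopology (wstar (SubTop (A_grp n p))) (IRS_tau n p))
           (pi2_push n p)"
proof -
  have p: "p > 0" using assms(1) by (simp add: prime_gt_0_nat)
  show ?thesis using part1[OF p] part2[OF p] part3[OF p] by blast
qed

end
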